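(* Let $G$ be a finite simple graph. If the independence attractor $\mathcal{A}(G)$ is a line segment, then $\mathcal{A}(G)=\mathcal{J}(P_G)$, where $P_G=I_G-1$; i.e. the independence attractor coincides with the independence fractal.
   Context: For a finite simple graph $G$, the independence polynomial is $I_G(z)=\sum_{i\ge0} a_i z^i$, $a_i$ being the number of sets of $i$ pairwise non-adjacent vertices; $P_G=I_G-1$. The lexicographic product $G[H]$ has vertex set $V(G)\times V(H)$, with $(u,v)\sim(u',v')$ iff $u\sim u'$ in $G$, or $u=u'$ and $v\sim v'$ in $H$; $G^m$ is the $m$-fold lexicographic product of $G$ with itself. The independence attractor is $\mathcal{A}(G)=\lim_{m\to\infty}\{z: I_{G^m}(z)=0\}$ in the Hausdorff metric on compact subsets of $\mathbb{C}$. For a polynomial $P$ of degree at least two, $\mathcal{J}(P)$ is the boundary of $\{z: (P^n(z))_{n>0}\text{ bounded}\}$. The independence fractal $\mathcal{F}(G)$ equals $\mathcal{J}(P_G)$ for $G\ne K_1$. *)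

theory Defs
  imports "HOL-Analysis.Analysis"
begin

definition finite_simple_graph :: "'a set \<Rightarrow> ('a \<Rightarrow> 'a \<Rightarrow> bool) \<Rightarrow> bool" where
  "finite_simple_graph V E \<longleftrightarrow> finite V \<and>
     (\<forall>x y. E x y \<longrightarrow> x \<in> V \<and> y \<in> V) \<and>
     (\<forall>x y. E x y \<longrightarrow> E y x) \<and> (\<forall>x. \<not> E x x)"

definition independent_set :: "'a set \<Rightarrow> ('a \<Rightarrow> 'a \<Rightarrow> bool) \<Rightarrow> 'a set \<Rightarrow> bool" where
  "independent_set V E S \<longleftrightarrow> S \<subseteq> V \<and> (\<forall>x\<in>S. \<forall>y\<in>S. \<not> E x y)"

definition indep_poly :: "'a set \<Rightarrow> ('a \<Rightarrow> 'a \<Rightarrow> bool) \<Rightarrow> complex \<Rightarrow> complex" where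
  "indep_poly V E z = (\<Sum>S\<in>{S. independent_set V E S}. z ^ card S)"

text \<open>m-fold lexicographic power G^m: vertices are lists of length m over V;
  adjacency of (u#xs) and (v#ys) is: u ~ v in G, or u = v and xs ~ ys in G^(m-1).
  This is exactly G[G^(m-1)].\<close>
definition lex_pow_V :: "'a set \<Rightarrow> nat \<Rightarrow> 'a list set" where
  "lex_pow_V V m = {xs. length xs = m \<and> set xs \<subseteq> V}"

fun lex_pow_E :: "('a \<Rightarrow> 'a \<Rightarrow> bool) \<Rightarrow> 'a list \<Rightarrow> 'a list \<Rightarrow> bool" where
  "lex_pow_E E (u # xs) (v # ys) = (E u v \<or> (u = v \<and> lex_pow_E E xs ys))"
| "lex_pow_E E _ _ = False"

definition indep_roots :: "'a set \<Rightarrow> ('a \<Rightarrow> 'a \<Rightarrow> bool) \<Rightarrow> nat \<Rightarrow> complex set" where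
  "indep_roots V E m = {z. indep_poly (lex_pow_V V m) (lex_pow_E E) z = 0}"

definition hausdorff_dist :: "'b::metric_space set \<Rightarrow> 'b set \<Rightarrow> real" where
  "hausdorff_dist S T = max (SUP x\<in>S. infdist x T) (SUP y\<in>T. infdist y S)"

definition is_indep_attractor :: "'a set \<Rightarrow> ('a \<Rightarrow> 'a \<Rightarrow> bool) \<Rightarrow> complex set \<Rightarrow> bool" where
  "is_indep_attractor V E A \<longleftrightarrow> compact A \<and> A \<noteq> {} \<and>
     ((\<lambda>m. hausdorff_dist (indep_roots V E m) A) \<longlongrightarrow> 0) sequentially"

definition julia :: "(complex \<Rightarrow> complex) \<Rightarrow> complex set" where
  "julia P = frontier {z. bounded (range (\<lambda>n. (P ^^ n) z))}"

end

theory Submission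
  imports Defs "HOL-Library.FuncSet" "HOL-Complex_Analysis.Complex_Analysis"
    "HOL-Computational_Algebra.Fundamental_Theorem_Algebra"
begin


definition lexE :: "('a \<Rightarrow> 'a \<Rightarrow> bool) \<Rightarrow> ('b \<Rightarrow> 'b \<Rightarrow> bool) \<Rightarrow> 'a \<times> 'b \<Rightarrow> 'a \<times> 'b \<Rightarrow> bool" where
  "lexE E F p q = (E (fst p) (fst q) \<or> (fst p = fst q \<and> F (snd p) (snd q)))"

lemma finite_IS: "finite V \<Longrightarrow> finite {S. independent_set V E S}"
  unfolding independent_set_def by (rule finite_subset[of _ "Pow V"]) auto

lemma indep_poly_minus1:
  assumes "finite V"
  shows "indep_poly V E z - 1 = (\<Sum>S\<in>{S. independent_set V E S} - {{}}. z ^ card S)"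
proof -
  have "{} \<in> {S. independent_set V E S}" by (simp add: independent_set_def)
  then show ?thesis unfolding indep_poly_def
    by (subst sum.remove[OF finite_IS[OF assms]]) auto
qed

lemma lexprod_bij:
  assumes irr: "\<And>x. \<not> E x x"
  shows "bij_betw (\<lambda>(T,g). Sigma T g)
     (Sigma {T. independent_set V E T} (\<lambda>T. PiE T (\<lambda>_. {U. independent_set W F U} - {{}})))
     {S. independent_set (V \<times> W) (lexE E F) S}"
proof (rule bij_betwI')
  fix x y
  assume x: "x \<in> (Sigma {T. independent_set V E T} (\<lambda>T. PiE T (\<lambda>_. {U. independent_set W F U} - {{}})))"
     and y: "y \<in> (Sigma {T. independent_set V E T} (\<lambda>T. PiE T (\<lambda>_. {U. independent_set W F U} - {{}})))"
  obtain T g where xe: "x = (T,g)" by force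
  obtain T' g' where ye: "y = (T',g')" by force
  show "((case x of (T, g) \<Rightarrow> Sigma T g) = (case y of (T, g) \<Rightarrow> Sigma T g)) = (x = y)"
  proof
    assume eq: "(case x of (T, g) \<Rightarrow> Sigma T g) = (case y of (T, g) \<Rightarrow> Sigma T g)"
    then have eq2: "Sigma T g = Sigma T' g'" using xe ye by simp
    have gne: "\<And>v. v \<in> T \<Longrightarrow> g v \<noteq> {}" using x xe by (auto simp: PiE_iff)
    have gne': "\<And>v. v \<in> T' \<Longrightarrow> g' v \<noteq> {}" using y ye by (auto simp: PiE_iff)
    have "fst ` Sigma T g = T" using gne by force
    moreover have "fst ` Sigma T' g' = T'" using gne' by force
    ultimately have TT: "T = T'" using eq2 by simp
    have "g = g'"
    proof
      fix v show "g v = g' v"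
      proof (cases "v \<in> T")
        case True
        have "g v = {w. (v,w) \<in> Sigma T g}" using True by auto
        also have "\<dots> = {w. (v,w) \<in> Sigma T' g'}" using eq2 by simp
        also have "\<dots> = g' v" using True TT by auto
        finally show ?thesis .
      next
        case False
        then show ?thesis using x y xe ye TT by (auto simp: PiE_iff extensional_def)
      qed
    qed
    then show "x = y" using xe ye TT by simp
  qed simp
next
  fix x
  assume x: "x \<in> (Sigma {T. independent_set V E T} (\<lambda>T. PiE T (\<lambda>_. {U. independent_set W F U} - {{}})))"
  obtain T g where xe: "x = (T,g)" by force
  have T: "independent_set V E T" and g: "\<And>v. v \<in> T \<Longrightarrow> independent_set W F (g v)"
    using x xe by (auto simp: PiE_iff)
  have "Sigma T g \<subseteq> V \<times> W" using T g by (auto simp: independent_set_def)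
  moreover have "\<not> lexE E F p q" if pS: "p \<in> Sigma T g" and qS: "q \<in> Sigma T g" for p q
  proof -
    obtain u x1 where p: "p = (u,x1)" "u \<in> T" "x1 \<in> g u" using pS by blast
    obtain u' x2 where q: "q = (u',x2)" "u' \<in> T" "x2 \<in> g u'" using qS by blast
    have "\<not> E u u'" using T p q by (auto simp: independent_set_def)
    moreover have "u = u' \<Longrightarrow> \<not> F x1 x2" using g[of u] p q by (auto simp: independent_set_def)
    ultimately show ?thesis using p q by (simp add: lexE_def)
  qed
  ultimately show "(case x of (T, g) \<Rightarrow> Sigma T g) \<in> {S. independent_set (V \<times> W) (lexE E F) S}"
    using xe by (simp add: independent_set_def)
next
  fix S
  assume S: "S \<in> {S. independent_set (V \<times> W) (lexE E F) S}"
  define T where "T = fst ` S"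
  define g where "g = restrict (\<lambda>v. {w. (v,w) \<in> S}) T"
  have "(T, g) \<in> (Sigma {T. independent_set V E T} (\<lambda>T. PiE T (\<lambda>_. {U. independent_set W F U} - {{}})))"
  proof -
    have SV: "S \<subseteq> V \<times> W" and Sn: "\<And>p q. p \<in> S \<Longrightarrow> q \<in> S \<Longrightarrow> \<not> lexE E F p q"
      using S by (auto simp: independent_set_def)
    have "independent_set V E T"
      unfolding independent_set_def
    proof
      show "T \<subseteq> V" using SV unfolding T_def by auto
      show "\<forall>x\<in>T. \<forall>y\<in>T. \<not> E x y"
      proof (intro ballI)
        fix x y assume "x \<in> T" "y \<in> T"
        then obtain x' y' where "(x,x') \<in> S" "(y,y') \<in> S" unfolding T_def by force
        from Sn[OF this] show "\<not> E x y" by (simp add: lexE_def)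
      qed
    qed
    moreover have "g \<in> PiE T (\<lambda>_. {U. independent_set W F U} - {{}})"
    proof (rule PiE_I)
      fix v assume v: "v \<in> T"
      then obtain w where w: "(v,w) \<in> S" unfolding T_def by force
      have "independent_set W F {w. (v,w) \<in> S}"
        unfolding independent_set_def
      proof
        show "{w. (v, w) \<in> S} \<subseteq> W" using SV by auto
        show "\<forall>x\<in>{w. (v, w) \<in> S}. \<forall>y\<in>{w. (v, w) \<in> S}. \<not> F x y"
        proof (intro ballI)
          fix x y assume "x \<in> {w. (v, w) \<in> S}" "y \<in> {w. (v, w) \<in> S}"
          then have "(v,x) \<in> S" "(v,y) \<in> S" by auto
          from Sn[OF this] show "\<not> F x y" by (simp add: lexE_def)
        qed
      qed
      then show "g v \<in> {U. independent_set W F U} - {{}}" using v w unfolding g_def by auto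
    next
      fix v assume "v \<notin> T" then show "g v = undefined" unfolding g_def by simp
    qed
    ultimately show ?thesis by simp
  qed
  moreover have "S = (case (T,g) of (T, g) \<Rightarrow> Sigma T g)"
  proof
    show "S \<subseteq> (case (T,g) of (T, g) \<Rightarrow> Sigma T g)"
    proof
      fix p assume "p \<in> S" then show "p \<in> (case (T,g) of (T, g) \<Rightarrow> Sigma T g)"
        unfolding T_def g_def by (cases p) force
    qed
    show "(case (T,g) of (T, g) \<Rightarrow> Sigma T g) \<subseteq> S"
      unfolding T_def g_def by (force split: if_splits)
  qed
  ultimately show "\<exists>x\<in>(Sigma {T. independent_set V E T} (\<lambda>T. PiE T (\<lambda>_. {U. independent_set W F U} - {{}}))).
            S = (case x of (T, g) \<Rightarrow> Sigma T g)" by blast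
qed

lemma lexprod_poly:
  assumes V: "finite V" and W: "finite W" and irr: "\<And>x. \<not> E x x"
  shows "indep_poly (V \<times> W) (lexE E F) z = indep_poly V E (indep_poly W F z - 1)"
proof -
  define NS where "NS = {U. independent_set W F U} - {{}}"
  define IS where "IS = {T. independent_set V E T}"
  have finNS: "finite NS" unfolding NS_def using finite_IS[OF W] by simp
  have finIS: "finite IS" unfolding IS_def using finite_IS[OF V] by simp
  have finT: "finite T" if "T \<in> IS" for T
    using that V unfolding IS_def independent_set_def by (auto intro: finite_subset)
  have finU: "finite U" if "U \<in> NS" for U
    using that W unfolding NS_def independent_set_def by (auto intro: finite_subset)
  have "indep_poly V E (indep_poly W F z - 1) = (\<Sum>T\<in>IS. (\<Sum>U\<in>NS. z ^ card U) ^ card T)"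
    unfolding indep_poly_minus1[OF W] unfolding indep_poly_def IS_def NS_def ..
  also have "\<dots> = (\<Sum>T\<in>IS. \<Prod>v\<in>T. \<Sum>U\<in>NS. z ^ card U)"
    by simp
  also have "\<dots> = (\<Sum>T\<in>IS. \<Sum>g\<in>PiE T (\<lambda>_. NS). \<Prod>v\<in>T. z ^ card (g v))"
    by (intro sum.cong refl prod_sum_PiE finT finNS)
  also have "\<dots> = (\<Sum>T\<in>IS. \<Sum>g\<in>PiE T (\<lambda>_. NS). z ^ card (Sigma T g))"
  proof (intro sum.cong refl)
    fix T g assume T: "T \<in> IS" and g: "g \<in> PiE T (\<lambda>_. NS)"
    have "card (Sigma T g) = (\<Sum>v\<in>T. card (g v))"
      using finT[OF T] g finU by (intro card_SigmaI) (auto simp: PiE_iff)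
    then show "(\<Prod>v\<in>T. z ^ card (g v)) = z ^ card (Sigma T g)"
      by (simp add: power_sum)
  qed
  also have "\<dots> = (\<Sum>(T,g)\<in>Sigma IS (\<lambda>T. PiE T (\<lambda>_. NS)). z ^ card (Sigma T g))"
    by (rule sum.Sigma) (use finIS finT finNS in \<open>auto intro: finite_PiE\<close>)
  also have "\<dots> = (\<Sum>S\<in>{S. independent_set (V \<times> W) (lexE E F) S}. z ^ card S)"
    using sum.reindex_bij_betw[OF lexprod_bij[where E=E and V=V and W=W and F=F, OF irr], where g="\<lambda>S. z ^ card S"]
    unfolding IS_def NS_def by (simp add: case_prod_beta')
  finally show ?thesis unfolding indep_poly_def by simp
qed

lemma indep_poly_iso:
  assumes inj: "inj_on h X" and adj: "\<And>x y. x \<in> X \<Longrightarrow> y \<in> X \<Longrightarrow> E' (h x) (h y) = E x y"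
  shows "indep_poly (h ` X) E' z = indep_poly X E z"
proof -
  have bij: "bij_betw (image h) {S. independent_set X E S} {S. independent_set (h ` X) E' S}"
  proof (rule bij_betwI')
    fix S S' assume "S \<in> {S. independent_set X E S}" "S' \<in> {S. independent_set X E S}"
    then have "S \<subseteq> X" "S' \<subseteq> X" by (auto simp: independent_set_def)
    then show "(h ` S = h ` S') = (S = S')" using inj by (metis inj_on_image_eq_iff)
  next
    fix S assume "S \<in> {S. independent_set X E S}"
    then have SX: "S \<subseteq> X" and Sn: "\<forall>x\<in>S. \<forall>y\<in>S. \<not> E x y" by (auto simp: independent_set_def)
    have "\<forall>x\<in>S. \<forall>y\<in>S. \<not> E' (h x) (h y)" using adj SX Sn by (metis subsetD)
    then show "h ` S \<in> {S. independent_set (h ` X) E' S}"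
      using SX by (auto simp: independent_set_def)
  next
    fix S assume S: "S \<in> {S. independent_set (h ` X) E' S}"
    define S0 where "S0 = {x \<in> X. h x \<in> S}"
    have "S = h ` S0" using S unfolding S0_def by (auto simp: independent_set_def)
    moreover have "S0 \<in> {S. independent_set X E S}"
      using S unfolding S0_def independent_set_def by (auto) (metis adj)
    ultimately show "\<exists>S0\<in>{S. independent_set X E S}. S = h ` S0" by blast
  qed
  have "indep_poly (h ` X) E' z = (\<Sum>S\<in>{S. independent_set X E S}. z ^ card (h ` S))"
    unfolding indep_poly_def using sum.reindex_bij_betw[OF bij, where g="\<lambda>S. z ^ card S"] by simp
  also have "\<dots> = indep_poly X E z"
    unfolding indep_poly_def
  proof (intro sum.cong refl)
    fix S assume "S \<in> {S. independent_set X E S}"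
    then have "S \<subseteq> X" by (auto simp: independent_set_def)
    then show "z ^ card (h ` S) = z ^ card S" using inj by (simp add: card_image inj_on_subset)
  qed
  finally show ?thesis .
qed

lemma lex_pow_V_Suc: "lex_pow_V V (Suc m) = (\<lambda>(u,xs). u # xs) ` (V \<times> lex_pow_V V m)"
  unfolding lex_pow_V_def
  by (auto simp: length_Suc_conv image_iff)

lemma lex_pow_V_finite: "finite V \<Longrightarrow> finite (lex_pow_V V m)"
  unfolding lex_pow_V_def using finite_lists_length_eq[of V m] by (simp add: conj_commute)

lemma indep_poly_lex_Suc:
  assumes V: "finite V" and irr: "\<And>x. \<not> E x x"
  shows "indep_poly (lex_pow_V V (Suc m)) (lex_pow_E E) z
       = indep_poly V E (indep_poly (lex_pow_V V m) (lex_pow_E E) z - 1)"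
proof -
  have "indep_poly (lex_pow_V V (Suc m)) (lex_pow_E E) z
       = indep_poly (V \<times> lex_pow_V V m) (lexE E (lex_pow_E E)) z"
    unfolding lex_pow_V_Suc
    by (rule indep_poly_iso) (auto simp: inj_on_def lexE_def)
  also have "\<dots> = indep_poly V E (indep_poly (lex_pow_V V m) (lex_pow_E E) z - 1)"
    by (rule lexprod_poly[OF V lex_pow_V_finite[OF V] irr])
  finally show ?thesis .
qed

lemma indep_poly_lex_0: "indep_poly (lex_pow_V V 0) (lex_pow_E E) z = 1 + z"
proof -
  have "lex_pow_V V 0 = {[]}" by (auto simp: lex_pow_V_def)
  moreover have "{S. independent_set {[]} (lex_pow_E E) S} = {{}, {[]}}"
    by (auto simp: independent_set_def)
  ultimately show ?thesis by (simp add: indep_poly_def)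
qed

lemma indep_poly_lex_iter:
  assumes V: "finite V" and irr: "\<And>x. \<not> E x x"
  shows "indep_poly (lex_pow_V V m) (lex_pow_E E) z = ((\<lambda>z. indep_poly V E z - 1) ^^ m) z + 1"
proof (induction m)
  case 0 then show ?case by (simp add: indep_poly_lex_0)
next
  case (Suc m)
  show ?case using Suc by (simp add: indep_poly_lex_Suc[OF V irr])
qed



lemma infdist_lessE:
  fixes x :: "'b::metric_space"
  assumes "X \<noteq> {}" "infdist x X < d"
  shows "\<exists>y\<in>X. dist x y < d"
proof -
  have "Inf ((\<lambda>a. dist x a) ` X) < d" using assms by (simp add: infdist_notempty)
  then obtain t where "t \<in> (\<lambda>a. dist x a) ` X" "t < d"
    using cInf_lessD[of "(\<lambda>a. dist x a) ` X" d] assms(1) by blast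
  then show ?thesis by blast
qed

lemma hd_le1:
  fixes X A :: "complex set"
  assumes "A \<noteq> {}" "bounded X" "x \<in> X" "bounded A"
  shows "infdist x A \<le> hausdorff_dist X A"
proof -
  obtain a0 where a0: "a0 \<in> A" using assms by blast
  obtain B where B: "\<And>y. y \<in> X \<Longrightarrow> norm y \<le> B" using assms(2) by (auto simp: bounded_iff)
  have "bdd_above ((\<lambda>y. infdist y A) ` X)"
  proof (rule bdd_aboveI2)
    fix y assume "y \<in> X"
    have "infdist y A \<le> dist y a0" by (rule infdist_le[OF a0])
    also have "\<dots> \<le> norm y + norm a0" by (simp add: dist_norm norm_triangle_ineq4)
    also have "\<dots> \<le> B + norm a0" using B[OF \<open>y \<in> X\<close>] by simp
    finally show "infdist y A \<le> B + norm a0" .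
  qed
  then have "infdist x A \<le> (SUP y\<in>X. infdist y A)" using cSUP_upper[OF assms(3)] by blast
  then show ?thesis unfolding hausdorff_dist_def by linarith
qed

lemma hd_le2:
  fixes X A :: "complex set"
  assumes "X \<noteq> {}" "bounded A" "a \<in> A" "bounded X"
  shows "infdist a X \<le> hausdorff_dist X A"
proof -
  obtain x0 where x0: "x0 \<in> X" using assms by blast
  obtain B where B: "\<And>y. y \<in> A \<Longrightarrow> norm y \<le> B" using assms(2) by (auto simp: bounded_iff)
  have "bdd_above ((\<lambda>y. infdist y X) ` A)"
  proof (rule bdd_aboveI2)
    fix y assume "y \<in> A"
    have "infdist y X \<le> dist y x0" by (rule infdist_le[OF x0])
    also have "\<dots> \<le> norm y + norm x0" by (simp add: dist_norm norm_triangle_ineq4)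
    also have "\<dots> \<le> B + norm x0" using B[OF \<open>y \<in> A\<close>] by simp
    finally show "infdist y X \<le> B + norm x0" .
  qed
  then have "infdist a X \<le> (SUP y\<in>A. infdist y X)" using cSUP_upper[OF assms(3)] by blast
  then show ?thesis unfolding hausdorff_dist_def by linarith
qed

locale dyn =
  fixes P :: "complex \<Rightarrow> complex" and R0 :: real and A :: "complex set" and a b :: complex
  assumes holP: "P holomorphic_on UNIV"
    and surjP: "\<And>y. \<exists>z. P z = y"
    and R0: "R0 \<ge> 2"
    and esc: "\<And>z. R0 \<le> norm z \<Longrightarrow> 2 * norm z \<le> norm (P z)"
    and ab: "a \<noteq> b" and Aseg: "A = closed_segment a b"
    and lim: "((\<lambda>m. hausdorff_dist {z. (P ^^ m) z = -1} A) \<longlongrightarrow> 0) sequentially"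
begin

definition K where "K = {z. bounded (range (\<lambda>n. (P ^^ n) z))}"
definition R where "R m = {z. (P ^^ m) z = -1}"

lemma A_compact: "compact A" using Aseg by simp
lemma A_ne: "A \<noteq> {}" using Aseg by simp
lemma A_closed: "closed A" using A_compact compact_imp_closed by blast
lemma A_bounded: "bounded A" using A_compact compact_imp_bounded by blast

lemma hol_iter: "(P ^^ n) holomorphic_on UNIV"
proof (induction n)
  case 0 then show ?case by (simp add: id_def holomorphic_on_ident)
next
  case (Suc n)
  have "(P \<circ> (P ^^ n)) holomorphic_on UNIV"
    by (rule holomorphic_on_compose[OF Suc]) (use holP in \<open>auto intro: holomorphic_on_subset\<close>)
  then show ?case by (simp only: funpow.simps(2))
qed

lemma cont_iter: "continuous_on UNIV (P ^^ n)"
  using hol_iter holomorphic_on_imp_continuous_on by blast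

lemma esc_iter: "R0 \<le> norm z \<Longrightarrow> 2 ^ n * norm z \<le> norm ((P ^^ n) z)"
proof (induction n)
  case 0 then show ?case by simp
next
  case (Suc n)
  have "R0 \<le> norm z" by fact
  then have ih: "2 ^ n * norm z \<le> norm ((P ^^ n) z)" using Suc by simp
  have "norm z \<le> 2 ^ n * norm z" using norm_ge_zero[of z] by (simp add: mult_le_cancel_right1 one_le_power)
  then have "R0 \<le> norm ((P ^^ n) z)" using ih \<open>R0 \<le> norm z\<close> by linarith
  then have "2 * norm ((P ^^ n) z) \<le> norm (P ((P ^^ n) z))" by (rule esc)
  then show ?case using ih by simp
qed

lemma big_not_K: assumes "R0 \<le> norm z" shows "z \<notin> K"
proof
  assume "z \<in> K"
  then obtain B where B: "\<And>n. norm ((P ^^ n) z) \<le> B" unfolding K_def bounded_iff by blast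
  obtain n :: nat where n: "B < real n" using reals_Archimedean2 by blast
  have "real n < real (2 ^ n)" using less_exp[of n] by (simp only: of_nat_less_iff)
  then have "real n < 2 ^ n" by simp
  moreover have "1 \<le> norm z" using assms R0 by linarith
  ultimately have "real n < 2 ^ n * norm z"
    by (smt (verit) mult_le_cancel_left1 zero_le_power)
  then show False using esc_iter[OF assms, of n] B[of n] n by linarith
qed

lemma K_sub: "K \<subseteq> ball 0 R0"
  using big_not_K by (force simp: dist_norm)

lemma K_bounded: "bounded K"
  using K_sub bounded_ball bounded_subset by blast

lemma K_iter: assumes "z \<in> K" shows "(P ^^ n) z \<in> K"
proof -
  have "range (\<lambda>k. (P ^^ k) ((P ^^ n) z)) \<subseteq> range (\<lambda>k. (P ^^ k) z)"
  proof (rule image_subsetI)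
    fix k
    have "(P ^^ (k + n)) z = (P ^^ k) ((P ^^ n) z)" by (simp add: funpow_add)
    then show "(P ^^ k) ((P ^^ n) z) \<in> range (\<lambda>k. (P ^^ k) z)" by (metis rangeI)
  qed
  then show ?thesis using assms unfolding K_def using bounded_subset by blast
qed

lemma K_closed: "closed K"
proof -
  have "- K = (\<Union>n. {z. R0 < norm ((P ^^ n) z)})"
  proof
    show "- K \<subseteq> (\<Union>n. {z. R0 < norm ((P ^^ n) z)})"
    proof
      fix z assume "z \<in> - K"
      then have "\<not> bounded (range (\<lambda>n. (P ^^ n) z))" by (simp add: K_def)
      then have "\<not> (\<forall>n. norm ((P ^^ n) z) \<le> R0)" unfolding bounded_iff by blast
      then show "z \<in> (\<Union>n. {z. R0 < norm ((P ^^ n) z)})" by (auto simp: not_le)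
    qed
    show "(\<Union>n. {z. R0 < norm ((P ^^ n) z)}) \<subseteq> - K"
    proof
      fix z assume "z \<in> (\<Union>n. {z. R0 < norm ((P ^^ n) z)})"
      then obtain n where "R0 < norm ((P ^^ n) z)" by auto
      then have "(P ^^ n) z \<notin> K" using big_not_K by simp
      then show "z \<in> - K" using K_iter by blast
    qed
  qed
  moreover have "open {z. R0 < norm ((P ^^ n) z)}" for n
    by (rule open_Collect_less) (auto intro!: continuous_intros cont_iter[unfolded continuous_on_eq_continuous_at[OF open_UNIV], rule_format]
      simp: continuous_on_eq_continuous_at)
  ultimately have "open (- K)" by auto
  then show ?thesis by (simp add: closed_def)
qed

lemma surj_iter: "\<exists>z. (P ^^ n) z = y"
proof (induction n arbitrary: y)
  case 0 then show ?case by simp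
next
  case (Suc n)
  obtain w where "(P ^^ n) w = y" using Suc by blast
  obtain z where "P z = w" using surjP by blast
  then show ?case using \<open>(P ^^ n) w = y\<close> by (metis comp_apply funpow_Suc_right)
qed

lemma R_ne: "R m \<noteq> {}" using surj_iter[of m "-1"] by (auto simp: R_def)

lemma R_bounded: "bounded (R m)"
proof -
  have "R m \<subseteq> ball 0 R0"
  proof
    fix z assume z: "z \<in> R m"
    show "z \<in> ball 0 R0"
    proof (rule ccontr)
      assume "z \<notin> ball 0 R0"
      then have "R0 \<le> norm z" by (simp add: dist_norm)
      then have "2 ^ m * norm z \<le> norm ((P ^^ m) z)" by (rule esc_iter)
      moreover have "norm z \<le> 2 ^ m * norm z" using norm_ge_zero[of z] by (simp add: mult_le_cancel_right1 one_le_power)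
      ultimately show False using z R0 \<open>R0 \<le> norm z\<close> by (simp add: R_def)
    qed
  qed
  then show ?thesis using bounded_ball bounded_subset by blast
qed

lemma R_Suc: "z \<in> R (Suc m) \<longleftrightarrow> P z \<in> R m"
  by (simp add: R_def funpow_Suc_right del: funpow.simps)

lemma hd_eventually: assumes "e > 0" obtains N where "\<And>m. m \<ge> N \<Longrightarrow> hausdorff_dist (R m) A < e"
proof -
  have "eventually (\<lambda>m. hausdorff_dist (R m) A < e) sequentially"
    using order_tendstoD(2)[OF lim assms] by (simp add: R_def)
  then show ?thesis using that unfolding eventually_sequentially by blast
qed

lemma fwd: assumes "x \<in> A" shows "P x \<in> A"
proof -
  have "infdist (P x) A < e" if e: "e > 0" for e
  proof -
    have "isCont P x" using holP holomorphic_on_imp_continuous_on continuous_on_eq_continuous_at by blast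
    then obtain d where d: "d > 0" "\<And>y. dist y x < d \<Longrightarrow> dist (P y) (P x) < e/2"
      unfolding continuous_at_eps_delta using e by (meson half_gt_zero)
    obtain N where N: "\<And>m. m \<ge> N \<Longrightarrow> hausdorff_dist (R m) A < min (e/2) d"
      using hd_eventually[of "min (e/2) d"] e d by auto
    have "infdist x (R (Suc N)) < d"
      using hd_le2[OF R_ne A_bounded assms R_bounded, of "Suc N"] N[of "Suc N"] by simp
    then obtain r where r: "r \<in> R (Suc N)" "dist x r < d" using infdist_lessE[OF R_ne] by blast
    have "P r \<in> R N" using r R_Suc by simp
    then have "infdist (P r) A < e/2"
      using hd_le1[OF A_ne R_bounded _ A_bounded, of "P r" N] N[of N] by simp
    moreover have "dist (P x) (P r) < e/2" using d(2)[of r] r by (simp add: dist_commute)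
    ultimately show ?thesis using infdist_triangle[of "P x" A "P r"] by simp
  qed
  then have "infdist (P x) A = 0" using infdist_nonneg[of "P x" A]
    by (metis less_eq_real_def linorder_not_le)
  then show ?thesis using in_closed_iff_infdist_zero[OF A_closed A_ne] by simp
qed

lemma nonconst: "\<not> P constant_on UNIV"
proof
  assume "P constant_on UNIV"
  then obtain c where c: "\<And>z. P z = c" by (auto simp: constant_on_def)
  define z0 :: complex where "z0 = of_real (R0 + norm c + 1)"
  have nz: "norm z0 = R0 + norm c + 1" unfolding z0_def using R0 norm_of_real[of "R0 + norm c + 1"]
    by (smt (verit) norm_ge_zero)
  have "2 * norm z0 \<le> norm (P z0)" using esc[of z0] nz R0 norm_ge_zero[of c] by linarith
  then show False using c nz R0 norm_ge_zero[of c] by simp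
qed

lemma bwd: assumes "P z \<in> A" shows "z \<in> A"
proof -
  have "infdist z A < e" if e: "e > 0" for e
  proof -
    have "open (P ` ball z (e/2))"
      by (rule open_mapping_thm[OF holP open_UNIV connected_UNIV open_ball subset_UNIV nonconst])
    moreover have "P z \<in> P ` ball z (e/2)" using e by simp
    ultimately obtain d where d: "d > 0" "ball (P z) d \<subseteq> P ` ball z (e/2)"
      by (meson open_contains_ball)
    obtain N where N: "\<And>m. m \<ge> N \<Longrightarrow> hausdorff_dist (R m) A < min (e/2) d"
      using hd_eventually[of "min (e/2) d"] e d by auto
    have "infdist (P z) (R N) < d"
      using hd_le2[OF R_ne A_bounded assms R_bounded, of N] N[of N] by simp
    then obtain s where s: "s \<in> R N" "dist (P z) s < d" using infdist_lessE[OF R_ne] by blast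
    then have "s \<in> P ` ball z (e/2)" using d by (auto simp: dist_commute)
    then obtain w where w: "w \<in> ball z (e/2)" "s = P w" by auto
    have "w \<in> R (Suc N)" using R_Suc s w by simp
    then have "infdist w A < e/2"
      using hd_le1[OF A_ne R_bounded _ A_bounded, of w "Suc N"] N[of "Suc N"] by simp
    moreover have "dist z w < e/2" using w by simp
    ultimately show ?thesis using infdist_triangle[of z A w] by simp
  qed
  then have "infdist z A = 0" using infdist_nonneg[of z A]
    by (metis less_eq_real_def linorder_not_le)
  then show ?thesis using in_closed_iff_infdist_zero[OF A_closed A_ne] by simp
qed

lemma fwd_iter: "x \<in> A \<Longrightarrow> (P ^^ n) x \<in> A"
  by (induction n) (auto intro: fwd)

lemma bwd_iter: "(P ^^ n) x \<in> A \<Longrightarrow> x \<in> A"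
  by (induction n arbitrary: x) (auto simp: funpow_Suc_right intro: bwd simp del: funpow.simps)

lemma A_sub_K: "A \<subseteq> K"
proof
  fix x assume "x \<in> A"
  then have "range (\<lambda>n. (P ^^ n) x) \<subseteq> A" using fwd_iter by auto
  then show "x \<in> K" unfolding K_def using A_bounded bounded_subset by blast
qed

end


context dyn
begin

lemma J_sub_A: "frontier K \<subseteq> A"
proof
  fix z assume zJ: "z \<in> frontier K"
  show "z \<in> A"
  proof (rule ccontr)
    assume zA: "z \<notin> A"
    have zK: "z \<in> K" using zJ K_closed by (simp add: frontier_def closure_closed)
    have "open (- A)" using A_closed by (simp add: closed_def)
    then obtain r where r0: "r > 0" "ball z r \<subseteq> - A" using zA open_contains_ball by blast
    then have r: "r > 0" "ball z r \<inter> A = {}" by auto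
    define f where "f n w = ((P ^^ n) w - a) / (b - a)" for n w
    have hol: "h holomorphic_on ball z r" if hr: "h \<in> range f" for h
    proof -
      obtain n where "h = f n" using hr by auto
      moreover have "(\<lambda>w. ((P ^^ n) w - a) / (b - a)) holomorphic_on ball z r"
        using hol_iter[of n] by (auto intro!: holomorphic_intros intro: holomorphic_on_subset)
      ultimately show ?thesis unfolding f_def by simp
    qed
    have X01: "h w \<noteq> 0 \<and> h w \<noteq> 1" if hr: "h \<in> range f" and wb: "w \<in> ball z r" for h w
    proof -
      obtain n where hn: "h = f n" using hr by auto
      have "w \<notin> A" using r wb by auto
      then have "(P ^^ n) w \<notin> A" using bwd_iter by blast
      then have "(P ^^ n) w \<noteq> a" "(P ^^ n) w \<noteq> b" using Aseg by auto
      then show ?thesis using hn ab by (auto simp: f_def divide_eq_1_iff)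
    qed
    obtain B where B: "\<And>n. norm ((P ^^ n) z) \<le> B" using zK unfolding K_def bounded_iff by blast
    have B0: "0 \<le> B" using B[of 0] norm_ge_zero[of z] by (simp del: norm_ge_zero)
    define r' where "r' = (B + norm a) / norm (b - a) + 1"
    have r'pos: "0 < r'" unfolding r'_def using B0 ab by (simp add: add_nonneg_pos)
    have rb: "norm (h z) \<le> r'" if hr: "h \<in> range f" for h
    proof -
      obtain n where hn: "h = f n" using hr by auto
      have "norm ((P ^^ n) z - a) \<le> B + norm a"
        using B[of n] norm_triangle_ineq4[of "(P ^^ n) z" a] by linarith
      then have "norm (h z) \<le> (B + norm a) / norm (b - a)"
        using ab unfolding hn f_def by (simp add: norm_divide divide_right_mono)
      then show ?thesis unfolding r'_def by simp
    qed
    have zb: "z \<in> ball z r" using r by simp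
    obtain B' Z where Z: "0 < B'" "open Z" "z \<in> Z" "Z \<subseteq> ball z r"
      "\<And>h w. h \<in> range f \<Longrightarrow> w \<in> Z \<Longrightarrow> norm (h w) \<le> B'"
    proof (rule GPicard1[where S="ball z r" and w=z and r=r' and Y="range f" and X="range f"])
      show "open (ball z r)" by simp
      show "connected (ball z r)" by simp
    qed (use zb r'pos hol X01 rb in auto)
    have "Z \<subseteq> K"
    proof
      fix w assume w: "w \<in> Z"
      have "norm ((P ^^ n) w) \<le> norm a + norm (b - a) * B'" for n
      proof -
        have "(P ^^ n) w = a + (b - a) * f n w" using ab unfolding f_def by simp
        moreover have "norm (f n w) \<le> B'" using Z(5)[of "f n" w] w by simp
        ultimately show ?thesis
          by (simp add: norm_triangle_le norm_mult mult_left_mono)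
      qed
      then show "w \<in> K" unfolding K_def bounded_iff by blast
    qed
    then have "z \<in> interior K" using Z interior_maximal by blast
    then show False using zJ by (simp add: frontier_def)
  qed
qed

definition phi where "phi w = Im ((w - a) / (b - a))"

lemma A_line: "x \<in> A \<Longrightarrow> phi x = 0"
proof -
  assume "x \<in> A"
  then obtain u :: real where u: "x = (1 - u) *\<^sub>R a + u *\<^sub>R b" using Aseg by (auto simp: closed_segment_def)
  have "(x - a) / (b - a) = of_real u" using ab unfolding u by (simp add: scaleR_conv_of_real field_simps)
  then show "phi x = 0" by (simp add: phi_def)
qed

lemma half_disjoint:
  assumes c: "c \<noteq> 0" and disj: "\<And>w. w \<in> frontier K \<Longrightarrow> Im ((w - a) / c) \<le> 0"
  shows "K \<inter> {w. 0 < Im ((w - a) / c)} = {}"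
proof (rule ccontr)
  let ?H = "{w. 0 < Im ((w - a) / c)}"
  assume ne: "K \<inter> ?H \<noteq> {}"
  have Heq: "?H = (\<lambda>t. a + c * t) ` {t. 0 < Im t}"
  proof
    show "?H \<subseteq> (\<lambda>t. a + c * t) ` {t. 0 < Im t}"
    proof
      fix w assume "w \<in> ?H"
      moreover have "w = a + c * ((w - a) / c)" using c by simp
      ultimately show "w \<in> (\<lambda>t. a + c * t) ` {t. 0 < Im t}" by blast
    qed
    show "(\<lambda>t. a + c * t) ` {t. 0 < Im t} \<subseteq> ?H" using c by auto
  qed
  have conn: "connected ?H" unfolding Heq
    by (intro connected_continuous_image convex_connected convex_halfspace_Im_gt) (auto intro!: continuous_intros)
  define s where "s = (R0 + norm a) / norm c + 1"
  have spos: "s > 0" unfolding s_def using R0 c by (simp add: add_nonneg_pos)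
  define w where "w = a + c * (\<i> * of_real s)"
  have "w \<in> ?H" using c spos unfolding w_def by simp
  moreover have "R0 \<le> norm w"
  proof -
    have "norm (c * (\<i> * of_real s)) = norm c * s" using spos by (simp add: norm_mult)
    also have "\<dots> = R0 + norm a + norm c" unfolding s_def using c by (simp add: field_simps)
    finally have "norm (c * (\<i> * of_real s)) = R0 + norm a + norm c" .
    moreover have "norm (c * (\<i> * of_real s)) \<le> norm w + norm a"
      unfolding w_def by (metis add_diff_cancel_left' norm_triangle_ineq4 add.commute)
    ultimately show ?thesis using c norm_ge_zero[of c] by linarith
  qed
  then have "w \<notin> K" by (rule big_not_K)
  ultimately have "?H - K \<noteq> {}" by blast
  then have "?H \<inter> frontier K \<noteq> {}" using connected_Int_frontier[OF conn] ne by blast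
  then show False using disj by force
qed

lemma K_line: "x \<in> K \<Longrightarrow> phi x = 0"
proof -
  assume xK: "x \<in> K"
  have c: "b - a \<noteq> 0" "-(b - a) \<noteq> 0" using ab by auto
  have "Im ((w - a) / (b - a)) \<le> 0" if "w \<in> frontier K" for w
    using A_line J_sub_A that by (auto simp: phi_def)
  from half_disjoint[OF c(1) this] have 1: "\<not> 0 < phi x" using xK by (auto simp: phi_def)
  have neg: "(w - a) / - (b - a) = - ((w - a) / (b - a))" for w
    by (metis divide_minus_right)
  have "Im ((w - a) / - (b - a)) \<le> 0" if "w \<in> frontier K" for w
    using A_line[of w] J_sub_A that unfolding neg by (auto simp: phi_def)
  from half_disjoint[OF c(2) this] have "\<not> 0 < Im ((x - a) / - (b - a))" using xK by auto
  then have 2: "\<not> phi x < 0" unfolding neg by (simp add: phi_def)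
  from 1 2 show "phi x = 0" by simp
qed

lemma interior_K: "interior K = {}"
proof (rule ccontr)
  assume "interior K \<noteq> {}"
  then obtain x where "x \<in> interior K" by blast
  then obtain e where e: "e > 0" "ball x e \<subseteq> K" using open_contains_ball open_interior interior_subset
    by (metis subset_trans)
  define t where "t = e / (2 * norm (b - a))"
  have tpos: "t > 0" using e ab unfolding t_def by simp
  define x' where "x' = x + (b - a) * (\<i> * of_real t)"
  have "dist x x' = norm (b - a) * t" unfolding x'_def dist_norm using tpos by (simp add: norm_mult)
  also have "\<dots> = e / 2" unfolding t_def using ab by simp
  finally have "x' \<in> ball x e" using e by simp
  then have "x' \<in> K" using e by blast
  have "x \<in> K" using e by (simp add: subset_iff)
  have "phi x' = phi x + t" unfolding phi_def x'_def using ab by (simp add: add_divide_distrib diff_add_eq[symmetric])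
  then show False using K_line[OF \<open>x \<in> K\<close>] K_line[OF \<open>x' \<in> K\<close>] tpos by simp
qed

theorem A_eq_julia: "A = julia P"
proof -
  have "frontier K = K" using K_closed interior_K by (simp add: frontier_def closure_closed)
  then have "julia P = K" by (simp add: julia_def K_def[symmetric])
  then show ?thesis using J_sub_A A_sub_K \<open>frontier K = K\<close> by auto
qed

end



theorem theorem3p4:
  fixes V :: "'a set" and E :: "'a \<Rightarrow> 'a \<Rightarrow> bool" and A :: "complex set"
  assumes "finite_simple_graph V E"
    and "V \<noteq> {}"
    and "is_indep_attractor V E A"
    and "\<exists>a b. a \<noteq> b \<and> A = closed_segment a b"
  shows "A = julia (\<lambda>z. indep_poly V E z - 1)"
proof -
  have fin: "finite V" and irr: "\<And>x. \<not> E x x" using assms(1) by (auto simp: finite_simple_graph_def)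
  define P where "P = (\<lambda>z. indep_poly V E z - 1)"
  obtain a b where ab: "a \<noteq> b" and Aseg: "A = closed_segment a b" using assms(4) by blast
  have roots: "indep_roots V E m = {z. (P ^^ m) z = -1}" for m
    unfolding indep_roots_def P_def using indep_poly_lex_iter[where V=V and E=E, OF fin irr]
    by (auto simp: add_eq_0_iff minus_equation_iff)
  have lim: "((\<lambda>m. hausdorff_dist {z. (P ^^ m) z = -1} A) \<longlongrightarrow> 0) sequentially"
    using assms(3) unfolding is_indep_attractor_def roots by simp
  define NS where "NS = {S. independent_set V E S} - {{}}"
  have finNS: "finite NS" unfolding NS_def using finite_IS[OF fin] by simp
  have cardNS: "card S \<ge> 1" if "S \<in> NS" for S
  proof -
    have "finite S" using that fin unfolding NS_def independent_set_def by (auto intro: finite_subset)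
    then show ?thesis using that unfolding NS_def by (simp add: Suc_le_eq card_gt_0_iff)
  qed
  define q :: "complex poly" where "q = (\<Sum>S\<in>NS. monom 1 (card S - 1))"
  have Pq: "P z = z * poly q z" for z
  proof -
    have "P z = (\<Sum>S\<in>NS. z ^ card S)" unfolding P_def NS_def by (rule indep_poly_minus1[OF fin])
    also have "\<dots> = (\<Sum>S\<in>NS. z * z ^ (card S - 1))"
    proof (rule sum.cong[OF refl])
      fix S assume "S \<in> NS"
      then have "card S = Suc (card S - 1)" using cardNS[of S] by simp
      then show "z ^ card S = z * z ^ (card S - 1)" by (metis power_Suc)
    qed
    also have "\<dots> = z * poly q z" unfolding q_def by (simp add: poly_sum poly_monom sum_distrib_left)
    finally show ?thesis .
  qed
  have holP: "P holomorphic_on UNIV"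
    unfolding P_def indep_poly_def by (intro holomorphic_intros)
  have NSne: "card NS \<ge> 1"
  proof -
    obtain v where "v \<in> V" using assms(2) by blast
    then have "{v} \<in> NS" unfolding NS_def independent_set_def using irr by auto
    then show ?thesis using finNS by (simp add: Suc_le_eq card_gt_0_iff) blast
  qed
  obtain c q' where qc: "q = pCons c q'" by (cases q)
  show ?thesis
  proof (cases "q' = 0")
    case False
    obtain r where r: "\<And>z. r \<le> norm z \<Longrightarrow> 2 \<le> norm (poly (pCons c q') z)"
      using poly_infinity[OF False, of 2 c] by blast
    define R0 where "R0 = max r 2"
    have esc: "2 * norm z \<le> norm (P z)" if "R0 \<le> norm z" for z
    proof -
      have "2 \<le> norm (poly q z)" using r[of z] that qc unfolding R0_def by simp
      then have "norm z * 2 \<le> norm z * norm (poly q z)" by (simp add: mult_left_mono)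
      then show ?thesis by (simp add: Pq norm_mult mult.commute)
    qed
    have surj: "\<exists>z. P z = y" for y
    proof -
      define z0 :: complex where "z0 = of_real R0"
      have nz0: "norm z0 = R0" unfolding z0_def R0_def by simp
      have "P z0 \<noteq> 0" using esc[of z0] nz0 unfolding R0_def by auto
      then have "\<not> constant (poly (pCons (- y) q))"
        unfolding constant_def using Pq[of z0] Pq[of 0] by (metis add_left_cancel mult_zero_left poly_pCons add.right_neutral)
      then obtain z where "poly (pCons (- y) q) z = 0" using fundamental_theorem_of_algebra by blast
      then have "P z = y" using Pq[of z] by simp
      then show ?thesis by blast
    qed
    interpret dyn P R0 A a b
      by unfold_locales (use holP surj esc ab Aseg lim in \<open>auto simp: R0_def\<close>)
    show ?thesis using A_eq_julia unfolding P_def by simp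
  next
    case True
    have pc: "poly q z = of_nat (card NS)" for z
    proof -
      have "poly q z = poly q 1" using qc True by simp
      also have "\<dots> = of_nat (card NS)" unfolding q_def by (simp add: poly_sum poly_monom)
      finally show ?thesis .
    qed
    show ?thesis
    proof (cases "card NS = 1")
      case False
      then have N2: "card NS \<ge> 2" using NSne by simp
      have esc: "2 * norm z \<le> norm (P z)" if "2 \<le> norm z" for z
      proof -
        have "norm (P z) = real (card NS) * norm z" using Pq pc by (simp add: norm_mult)
        moreover have "2 * norm z \<le> real (card NS) * norm z"
          using N2 by (intro mult_right_mono) auto
        ultimately show ?thesis by simp
      qed
      have surj: "\<exists>z. P z = y" for y
      proof -
        have "P (y / of_nat (card NS)) = y" using Pq pc N2 by simp
        then show ?thesis by blast
      qed
      interpret dyn P 2 A a b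
        by unfold_locales (use holP surj esc ab Aseg lim in auto)
      show ?thesis using A_eq_julia unfolding P_def by simp
    next
      case True
      have Pid: "P = (\<lambda>z. z)" using Pq pc True by (auto simp: fun_eq_iff)
      have "(P ^^ m) = id" for m unfolding Pid by (induction m) auto
      then have Rm: "{z. (P ^^ m) z = -1} = {-1}" for m by auto
      have lim1: "((\<lambda>m. hausdorff_dist {-1} A) \<longlongrightarrow> 0) sequentially" using lim unfolding Rm .
      then have hd0: "hausdorff_dist {-1} A = 0" using LIMSEQ_const_iff by blast
      have "bounded A" using Aseg by (simp add: compact_imp_bounded)
      have "dist x (-1) = 0" if "x \<in> A" for x
      proof -
        have "infdist x {-1} \<le> hausdorff_dist {-1} A"
          by (rule hd_le2) (use that \<open>bounded A\<close> in auto)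
        then show ?thesis using hd0 by simp
      qed
      then have "a = -1" "b = -1" using Aseg by auto
      then show ?thesis using ab by simp
    qed
  qed
qed


end
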